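(* Consider the stochastic epidemic model described in the context under the linear control policy $u(k)=K\,I(k)$, $k\ge 0$, with a constant gain $K$. Suppose $$\delta_{\max}<\frac{v_{\min}(1-d_{\max})}{v_{\max}}\qquad\text{and}\qquad \frac{\delta_{\max}}{v_{\min}}<K<\frac{1-d_{\max}}{v_{\max}}.$$ Then: (i) $\lim_{k\to\infty} I(k)/I_0=0$ with probability one; (ii) $I(k)<I_0$ for all $k\ge 1$ with probability one. Moreover, if $K=\delta_{\max}/v_{\min}$, then $I(k)\le I_0$ for all $k$ with probability one.
   Context: Time is indexed by days $k=0,1,2,\dots$. Let $(\delta(k))_{k\ge0}$, $(d_I(k))_{k\ge0}$, $(v(k))_{k\ge0}$ be three mutually independent sequences of random variables, each sequence i.i.d. in $k$, with $0\le \delta(k)\le \delta_{\max}$, $0\le d_I(k)\le d_{\max}$ where $d_{\max}<1$, and $0<v_{\min}\le v(k)\le v_{\max}\le 1$; moreover $\delta_{\max}$ lies in the support of $\delta(k)$, $d_{\max}$ in the support of $d_I(k)$, and $v_{\min},v_{\max}$ in the support of $v(k)$. Given a control sequence $u(k)\ge 0$, the susceptible, infected, recovered and deceased cases evolve by $S(k+1)=S(k)-\delta(k)I(k)$, $I(k+1)=(1+\delta(k))I(k)-v(k)u(k)-d_I(k)I(k)$, $R(k+1)=R(k)+v(k)u(k)$, $D(k+1)=D(k)+d_I(k)I(k)$, with initial values $S(0)=S_0$, $I(0)=I_0>0$, $R(0)=D(0)=0$, where $I_0\delta_{\max}<S_0$. *)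

theory Defs
  imports "HOL-Probability.Probability"
begin

text \<open>Closed-loop epidemic model under the linear control u(k) = K * I(k).
  State = (S, I, R, D), driven by the sample path of delta, d_I, v.\<close>
fun epi :: "real \<Rightarrow> (nat \<Rightarrow> 'a \<Rightarrow> real) \<Rightarrow> (nat \<Rightarrow> 'a \<Rightarrow> real) \<Rightarrow> (nat \<Rightarrow> 'a \<Rightarrow> real)
             \<Rightarrow> real \<Rightarrow> real \<Rightarrow> nat \<Rightarrow> 'a \<Rightarrow> real \<times> real \<times> real \<times> real" where
  "epi K dl dI v S0 I0 0 \<omega> = (S0, I0, 0, 0)"
| "epi K dl dI v S0 I0 (Suc k) \<omega> =
     (case epi K dl dI v S0 I0 k \<omega> of (S, I, R, D) \<Rightarrow>
        (let u = K * I in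
          (S - dl k \<omega> * I,
           (1 + dl k \<omega>) * I - v k \<omega> * u - dI k \<omega> * I,
           R + v k \<omega> * u,
           D + dI k \<omega> * I)))"

definition infected :: "real \<Rightarrow> (nat \<Rightarrow> 'a \<Rightarrow> real) \<Rightarrow> (nat \<Rightarrow> 'a \<Rightarrow> real) \<Rightarrow> (nat \<Rightarrow> 'a \<Rightarrow> real)
             \<Rightarrow> real \<Rightarrow> real \<Rightarrow> nat \<Rightarrow> 'a \<Rightarrow> real" where
  "infected K dl dI v S0 I0 k \<omega> = fst (snd (epi K dl dI v S0 I0 k \<omega>))"

text \<open>The three sequences combined into one family, for stating mutual independence.\<close>
definition noise :: "(nat \<Rightarrow> 'a \<Rightarrow> real) \<Rightarrow> (nat \<Rightarrow> 'a \<Rightarrow> real) \<Rightarrow> (nat \<Rightarrow> 'a \<Rightarrow> real)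
             \<Rightarrow> nat + nat + nat \<Rightarrow> 'a \<Rightarrow> real" where
  "noise dl dI v i = (case i of Inl k \<Rightarrow> dl k | Inr (Inl k) \<Rightarrow> dI k | Inr (Inr k) \<Rightarrow> v k)"

definition in_support :: "'a measure \<Rightarrow> ('a \<Rightarrow> real) \<Rightarrow> real \<Rightarrow> bool" where
  "in_support M X x \<longleftrightarrow> (\<forall>e>0. measure M {\<omega> \<in> space M. \<bar>X \<omega> - x\<bar> < e} > 0)"

end

theory Submission
  imports Defs
begin

lemma infected_Suc:
  "infected K dl dI v S0 I0 (Suc k) w =
     (1 + dl k w - v k w * K - dI k w) * infected K dl dI v S0 I0 k w"
  unfolding infected_def
  by (cases "epi K dl dI v S0 I0 k w") (simp add: Let_def algebra_simps)

lemma infected_0: "infected K dl dI v S0 I0 0 w = I0"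
  unfolding infected_def by simp

lemma geo_bound:
  assumes "\<And>k. 0 < 1 + dl k w - v k w * K - dI k w"
    and "\<And>k. 1 + dl k w - v k w * K - dI k w \<le> c"
    and "I0 > 0"
  shows "0 < infected K dl dI v S0 I0 k w \<and> infected K dl dI v S0 I0 k w \<le> c ^ k * I0"
proof (induction k)
  case 0 then show ?case using assms by (simp add: infected_0)
next
  case (Suc k)
  let ?a = "1 + dl k w - v k w * K - dI k w"
  have a: "0 < ?a" "?a \<le> c" using assms by auto
  have "?a * infected K dl dI v S0 I0 k w \<le> c * (c ^ k * I0)"
    using Suc a by (intro mult_mono) auto
  then show ?case using Suc a by (simp add: infected_Suc)
qed

theorem theorem1:
  fixes M :: "'a measure"
    and dl dI v :: "nat \<Rightarrow> 'a \<Rightarrow> real"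
    and dmax_delta d_max v_min v_max S0 I0 K :: real
  assumes P: "prob_space M"
    and meas: "\<And>i. noise dl dI v i \<in> borel_measurable M"
    and indep: "prob_space.indep_vars M (\<lambda>_. borel) (noise dl dI v) UNIV"
    and iid_dl: "\<And>k. distr M borel (dl k) = distr M borel (dl 0)"
    and iid_dI: "\<And>k. distr M borel (dI k) = distr M borel (dI 0)"
    and iid_v: "\<And>k. distr M borel (v k) = distr M borel (v 0)"
    and bnd_dl: "\<And>k. AE \<omega> in M. 0 \<le> dl k \<omega> \<and> dl k \<omega> \<le> dmax_delta"
    and bnd_dI: "\<And>k. AE \<omega> in M. 0 \<le> dI k \<omega> \<and> dI k \<omega> \<le> d_max"
    and bnd_v: "\<And>k. AE \<omega> in M. v_min \<le> v k \<omega> \<and> v k \<omega> \<le> v_max"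
    and dmax_lt1: "d_max < 1"
    and vmin_pos: "0 < v_min" and vmin_le: "v_min \<le> v_max" and vmax_le: "v_max \<le> 1"
    and supp_dl: "\<And>k. in_support M (dl k) dmax_delta"
    and supp_dI: "\<And>k. in_support M (dI k) d_max"
    and supp_vmin: "\<And>k. in_support M (v k) v_min"
    and supp_vmax: "\<And>k. in_support M (v k) v_max"
    and I0_pos: "I0 > 0"
    and S0_bnd: "I0 * dmax_delta < S0"
    and cond: "dmax_delta < v_min * (1 - d_max) / v_max"
  shows "(dmax_delta / v_min < K \<and> K < (1 - d_max) / v_max \<longrightarrow>
            (AE \<omega> in M. (\<lambda>k. infected K dl dI v S0 I0 k \<omega> / I0) \<longlonglongrightarrow> 0)
          \<and> (AE \<omega> in M. \<forall>k\<ge>1. infected K dl dI v S0 I0 k \<omega> < I0))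
       \<and> (K = dmax_delta / v_min \<longrightarrow>
            (AE \<omega> in M. \<forall>k. infected K dl dI v S0 I0 k \<omega> \<le> I0))"
proof -
  interpret prob_space M by (rule P)
  have AEall: "AE w in M. \<forall>k. (0 \<le> dl k w \<and> dl k w \<le> dmax_delta) \<and>
       (0 \<le> dI k w \<and> dI k w \<le> d_max) \<and> (v_min \<le> v k w \<and> v k w \<le> v_max)"
    using bnd_dl bnd_dI bnd_v by (simp add: AE_all_countable AE_conj_iff)
  have vmaxpos: "0 < v_max" using vmin_pos vmin_le by linarith
  have cond2: "dmax_delta * v_max < v_min * (1 - d_max)"
    using cond vmaxpos by (simp add: field_simps)
  show ?thesis
  proof (intro conjI impI)
    assume K: "dmax_delta / v_min < K \<and> K < (1 - d_max) / v_max"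
    define c where "c = 1 + dmax_delta - v_min * K"
    have K1: "dmax_delta < v_min * K" using K vmin_pos by (simp add: field_simps)
    have K2: "K * v_max < 1 - d_max" using K vmaxpos by (simp add: field_simps)
    have c1: "c < 1" using K1 c_def by simp
    have main: "AE w in M. 0 \<le> c \<and> (\<forall>k. 0 < infected K dl dI v S0 I0 k w \<and> infected K dl dI v S0 I0 k w \<le> c ^ k * I0)"
      using AEall
    proof eventually_elim
      case (elim w)
      have Kpos: "K > 0" using elim[rule_format, of 0] K1 vmin_pos
        by (smt (verit) mult_nonneg_nonpos)
      have lo: "0 < 1 + dl k w - v k w * K - dI k w" for k
      proof -
        have "v k w * K \<le> v_max * K" using elim Kpos by (intro mult_right_mono) auto
        then show ?thesis using elim[rule_format, of k] K2 by (simp add: algebra_simps)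
      qed
      have hi: "1 + dl k w - v k w * K - dI k w \<le> c" for k
      proof -
        have "v_min * K \<le> v k w * K" using elim Kpos by (intro mult_right_mono) auto
        then show ?thesis using elim[rule_format, of k] c_def by simp
      qed
      have "0 \<le> c" using lo[of 0] hi[of 0] by linarith
      then show ?case using geo_bound[of dl w v K dI c I0 S0, OF lo hi I0_pos] by blast
    qed
    show "AE w in M. (\<lambda>k. infected K dl dI v S0 I0 k w / I0) \<longlonglongrightarrow> 0"
      using main
    proof eventually_elim
      case (elim w)
      have c0: "0 \<le> c" using elim by blast
      have lim: "(\<lambda>k. c ^ k) \<longlonglongrightarrow> 0" using c0 c1 by (intro LIMSEQ_power_zero) auto
      show ?case
      proof (rule tendsto_sandwich[of "\<lambda>_. 0" _ _ "\<lambda>k. c ^ k"])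
        show "\<forall>\<^sub>F n in sequentially. 0 \<le> infected K dl dI v S0 I0 n w / I0"
          using elim I0_pos by (auto intro!: always_eventually less_imp_le)
        show "\<forall>\<^sub>F n in sequentially. infected K dl dI v S0 I0 n w / I0 \<le> c ^ n"
          using elim I0_pos by (auto intro!: always_eventually simp: divide_le_eq)
      qed (auto simp: lim)
    qed
    show "AE w in M. \<forall>k\<ge>1. infected K dl dI v S0 I0 k w < I0"
      using main
    proof eventually_elim
      case (elim w)
      show ?case
      proof (intro allI impI)
        fix k :: nat assume "1 \<le> k"
        have c0: "0 \<le> c" using elim by blast
        from \<open>1 \<le> k\<close> have "c ^ k < 1" using c0 c1 by (simp add: power_less_one_iff)
        then have "c ^ k * I0 < I0" using I0_pos by simp
        then show "infected K dl dI v S0 I0 k w < I0" using elim by (meson le_less_trans)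
      qed
    qed
  next
    assume K: "K = dmax_delta / v_min"
    show "AE w in M. \<forall>k. infected K dl dI v S0 I0 k w \<le> I0"
      using AEall
    proof eventually_elim
      case (elim w)
      have d0: "0 \<le> dmax_delta" using elim[rule_format, of 0] by linarith
      have Kpos: "K \<ge> 0" using K d0 vmin_pos by simp
      have vK: "v_min * K = dmax_delta" using K vmin_pos by simp
      have "(K * v_max) * v_min < (1 - d_max) * v_min"
      proof -
        have "(K * v_max) * v_min = (v_min * K) * v_max" by (simp add: algebra_simps)
        also have "... = dmax_delta * v_max" using vK by simp
        also have "... < v_min * (1 - d_max)" by (rule cond2)
        also have "... = (1 - d_max) * v_min" by (rule mult.commute)
        finally show ?thesis .
      qed
      then have K2: "K * v_max < 1 - d_max"
        using vmin_pos by (simp add: mult_less_cancel_right)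
      have lo: "0 < 1 + dl k w - v k w * K - dI k w" for k
      proof -
        have "v k w * K \<le> v_max * K" using elim Kpos by (intro mult_right_mono) auto
        then show ?thesis using elim[rule_format, of k] K2 by (simp add: algebra_simps)
      qed
      have hi: "1 + dl k w - v k w * K - dI k w \<le> 1" for k
      proof -
        have "v_min * K \<le> v k w * K" using elim Kpos by (intro mult_right_mono) auto
        then show ?thesis using elim[rule_format, of k] vK by simp
      qed
      show ?case using geo_bound[of dl w v K dI 1 I0 S0, OF lo hi I0_pos] by simp
    qed
  qed
qed

end
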